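(* A poset is a p-morphic image of an $n$-comb (for some $n$) if and only if it is a broken $m$-comb for some $m$.
   Context: A poset $P$ is an $n$-comb if $P=\{x_1,\dots,x_n\}\sqcup\{y_1,\dots,y_n\}$ with order given by: for each $z\in P$, $y_i\le z$ iff $y_i=z$; and $x_i\le z$ iff ($z=x_j$ with $i\le j$) or ($z=y_j$ with $i\le j$). (So $x_1<\dots<x_n$ is a chain and each $x_i$ lies below $y_j$ for $j\ge i$.) A broken $n$-comb is a subposet $Q\subseteq P$ of an $n$-comb $P$ with $\{x_1,\dots,x_n\}\subseteq Q$, with the induced order. A p-morphism $f:P\to Q$ is an order-preserving map such that whenever $f(x)\le y$ there is $x'\ge x$ with $f(x')=y$; $Q$ is a p-morphic image of $P$ if there is a surjective p-morphism. *)

theory Defs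
  imports Main
begin

definition is_poset :: "'a set \<Rightarrow> ('a \<Rightarrow> 'a \<Rightarrow> bool) \<Rightarrow> bool" where
  "is_poset A le \<longleftrightarrow>
     (\<forall>x\<in>A. le x x) \<and>
     (\<forall>x\<in>A. \<forall>y\<in>A. le x y \<and> le y x \<longrightarrow> x = y) \<and>
     (\<forall>x\<in>A. \<forall>y\<in>A. \<forall>z\<in>A. le x y \<and> le y z \<longrightarrow> le x z)"

text \<open>Elements of a comb: CX i stands for x_i, CY i for y_i.\<close>
datatype comb_elt = CX nat | CY nat

definition comb_carrier :: "nat \<Rightarrow> comb_elt set" where
  "comb_carrier n = {CX i | i. 1 \<le> i \<and> i \<le> n} \<union> {CY i | i. 1 \<le> i \<and> i \<le> n}"

fun comb_le :: "comb_elt \<Rightarrow> comb_elt \<Rightarrow> bool" where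
  "comb_le (CX i) (CX j) = (i \<le> j)"
| "comb_le (CX i) (CY j) = (i \<le> j)"
| "comb_le (CY i) (CY j) = (i = j)"
| "comb_le (CY i) (CX j) = False"

definition broken_comb :: "nat \<Rightarrow> comb_elt set \<Rightarrow> bool" where
  "broken_comb m Q \<longleftrightarrow> Q \<subseteq> comb_carrier m \<and> {CX i | i. 1 \<le> i \<and> i \<le> m} \<subseteq> Q"

definition p_morphism ::
  "'a set \<Rightarrow> ('a \<Rightarrow> 'a \<Rightarrow> bool) \<Rightarrow> 'b set \<Rightarrow> ('b \<Rightarrow> 'b \<Rightarrow> bool) \<Rightarrow> ('a \<Rightarrow> 'b) \<Rightarrow> bool" where
  "p_morphism A leA B leB f \<longleftrightarrow>
     (\<forall>x\<in>A. f x \<in> B) \<and>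
     (\<forall>x\<in>A. \<forall>y\<in>A. leA x y \<longrightarrow> leB (f x) (f y)) \<and>
     (\<forall>x\<in>A. \<forall>y\<in>B. leB (f x) y \<longrightarrow> (\<exists>x'\<in>A. leA x x' \<and> f x' = y))"

definition p_morphic_image ::
  "'b set \<Rightarrow> ('b \<Rightarrow> 'b \<Rightarrow> bool) \<Rightarrow> 'a set \<Rightarrow> ('a \<Rightarrow> 'a \<Rightarrow> bool) \<Rightarrow> bool" where
  "p_morphic_image B leB A leA \<longleftrightarrow> (\<exists>f. p_morphism A leA B leB f \<and> f ` A = B)"

definition order_iso ::
  "'a set \<Rightarrow> ('a \<Rightarrow> 'a \<Rightarrow> bool) \<Rightarrow> 'b set \<Rightarrow> ('b \<Rightarrow> 'b \<Rightarrow> bool) \<Rightarrow> ('a \<Rightarrow> 'b) \<Rightarrow> bool" where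
  "order_iso A leA B leB g \<longleftrightarrow> bij_betw g A B \<and> (\<forall>x\<in>A. \<forall>y\<in>A. leA x y \<longleftrightarrow> leB (g x) (g y))"

end

theory Submission
  imports Defs
begin
lemma comb_le_refl: "comb_le z z" by (cases z) auto

lemma comb_le_CY_left: "comb_le (CY j) z \<longleftrightarrow> z = CY j" by (cases z) auto

lemma pm_comp_iso:
  assumes "p_morphism A leA B leB f" "order_iso B leB C leC h"
  shows "p_morphism A leA C leC (h \<circ> f)"
proof -
  have bij: "bij_betw h B C" and ord: "\<forall>x\<in>B. \<forall>y\<in>B. leB x y \<longleftrightarrow> leC (h x) (h y)"
    using assms(2) unfolding order_iso_def by auto
  have f1: "\<forall>x\<in>A. f x \<in> B" and f2: "\<forall>x\<in>A. \<forall>y\<in>A. leA x y \<longrightarrow> leB (f x) (f y)"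
    and f3: "\<forall>x\<in>A. \<forall>y\<in>B. leB (f x) y \<longrightarrow> (\<exists>x'\<in>A. leA x x' \<and> f x' = y)"
    using assms(1) unfolding p_morphism_def by auto
  have hB: "h ` B = C" using bij by (simp add: bij_betw_def)
  show ?thesis unfolding p_morphism_def
  proof (intro conjI ballI impI)
    fix x assume "x \<in> A" thus "(h \<circ> f) x \<in> C" using f1 hB by auto
  next
    fix x y assume "x \<in> A" "y \<in> A" "leA x y" thus "leC ((h \<circ> f) x) ((h \<circ> f) y)"
      using f1 f2 ord by auto
  next
    fix x y assume x: "x \<in> A" and y: "y \<in> C" and le: "leC ((h \<circ> f) x) y"
    obtain b where b: "b \<in> B" "y = h b" using y hB by auto
    have "leB (f x) b" using ord f1 x b le by auto
    then obtain x' where "x' \<in> A" "leA x x'" "f x' = b" using f3 x b by blast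
    thus "\<exists>x'\<in>A. leA x x' \<and> (h \<circ> f) x' = y" using b by auto
  qed
qed

lemma iso_inv:
  assumes "order_iso A leA B leB g"
  shows "order_iso B leB A leA (inv_into A g)"
proof -
  have bij: "bij_betw g A B" and ord: "\<forall>x\<in>A. \<forall>y\<in>A. leA x y \<longleftrightarrow> leB (g x) (g y)"
    using assms unfolding order_iso_def by auto
  have b2: "bij_betw (inv_into A g) B A" using bij by (rule bij_betw_inv_into)
  have "\<forall>x\<in>B. \<forall>y\<in>B. leB x y \<longleftrightarrow> leA (inv_into A g x) (inv_into A g y)"
  proof (intro ballI)
    fix x y assume x: "x \<in> B" and y: "y \<in> B"
    have ix: "inv_into A g x \<in> A" "g (inv_into A g x) = x"
      using x bij b2 by (auto simp: bij_betw_def f_inv_into_f)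
    have iy: "inv_into A g y \<in> A" "g (inv_into A g y) = y"
      using y bij b2 by (auto simp: bij_betw_def f_inv_into_f)
    show "leB x y \<longleftrightarrow> leA (inv_into A g x) (inv_into A g y)"
      using ord ix iy by metis
  qed
  thus ?thesis using b2 unfolding order_iso_def by auto
qed

definition phi :: "nat \<Rightarrow> comb_elt set \<Rightarrow> comb_elt \<Rightarrow> comb_elt" where
  "phi m Q z = (case z of CX i \<Rightarrow> CX i
     | CY j \<Rightarrow> (if \<exists>k. j \<le> k \<and> CY k \<in> Q then CY (LEAST k. j \<le> k \<and> CY k \<in> Q) else CX m))"

lemma phi_pm:
  assumes "broken_comb m Q"
  shows "p_morphism (comb_carrier m) comb_le Q comb_le (phi m Q) \<and> phi m Q ` comb_carrier m = Q"
proof -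
  have QC: "Q \<subseteq> comb_carrier m" and XQ: "\<And>i. 1 \<le> i \<Longrightarrow> i \<le> m \<Longrightarrow> CX i \<in> Q"
    using assms unfolding broken_comb_def by auto
  have Qc: "\<And>z. z \<in> Q \<Longrightarrow> (\<exists>i. z = CX i \<and> 1 \<le> i \<and> i \<le> m) \<or> (\<exists>i. z = CY i \<and> 1 \<le> i \<and> i \<le> m)"
    using QC unfolding comb_carrier_def by auto
  have car: "z \<in> comb_carrier m \<longleftrightarrow> (\<exists>i. z = CX i \<and> 1 \<le> i \<and> i \<le> m) \<or> (\<exists>i. z = CY i \<and> 1 \<le> i \<and> i \<le> m)" for z
    unfolding comb_carrier_def by auto
  have L: "CY (LEAST k. j \<le> k \<and> CY k \<in> Q) \<in> Q \<and> j \<le> (LEAST k. j \<le> k \<and> CY k \<in> Q)"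
    if "\<exists>k. j \<le> k \<and> CY k \<in> Q" for j
    using that by (metis (mono_tags, lifting) LeastI)
  have into: "phi m Q z \<in> Q" if "z \<in> comb_carrier m" for z
  proof -
    from that car consider (x) i where "z = CX i" "1 \<le> i" "i \<le> m" | (y) i where "z = CY i" "1 \<le> i" "i \<le> m"
      by blast
    thus ?thesis
    proof cases
      case x thus ?thesis using XQ by (simp add: phi_def)
    next
      case y thus ?thesis using XQ L[of i] by (auto simp: phi_def)
    qed
  qed
  have CYid: "phi m Q (CY j) = CY j" if "CY j \<in> Q" for j
  proof -
    have "(LEAST k. j \<le> k \<and> CY k \<in> Q) = j"
      using that by (intro Least_equality) auto
    thus ?thesis using that by (auto simp: phi_def)
  qed
  have surj: "Q \<subseteq> phi m Q ` comb_carrier m"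
  proof
    fix z assume z: "z \<in> Q"
    from Qc[OF z] show "z \<in> phi m Q ` comb_carrier m"
    proof
      assume "\<exists>i. z = CX i \<and> 1 \<le> i \<and> i \<le> m"
      then obtain i where "z = CX i" "1 \<le> i" "i \<le> m" by blast
      thus ?thesis by (intro image_eqI[of _ _ "CX i"]) (auto simp: phi_def car)
    next
      assume "\<exists>i. z = CY i \<and> 1 \<le> i \<and> i \<le> m"
      then obtain i where i: "z = CY i" "1 \<le> i" "i \<le> m" by blast
      thus ?thesis using CYid[of i] z by (intro image_eqI[of _ _ "CY i"]) (auto simp: car)
    qed
  qed
  have mono: "comb_le (phi m Q x) (phi m Q y)" if "comb_le x y" "y \<in> comb_carrier m" for x y
  proof (cases x)
    case (CX i)
    show ?thesis
    proof (cases y)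
      case (CX j) thus ?thesis using \<open>x = CX i\<close> that by (simp add: phi_def)
    next
      case (CY j)
      have "i \<le> j" using that CY \<open>x = CX i\<close> by simp
      have "j \<le> m" using that CY by (auto simp: car)
      thus ?thesis using CY \<open>x = CX i\<close> L[of j] \<open>i \<le> j\<close>
        by (auto simp: phi_def car intro: le_trans)
    qed
  next
    case (CY i) thus ?thesis using that(1) comb_le_CY_left comb_le_refl by metis
  qed
  have bk: "\<exists>x'\<in>comb_carrier m. comb_le x x' \<and> phi m Q x' = y"
    if hx: "x \<in> comb_carrier m" and hy: "y \<in> Q" and hle: "comb_le (phi m Q x) y" for x y
  proof -
    from hx car consider (x) i where "x = CX i" "1 \<le> i" "i \<le> m" | (y) i where "x = CY i" "1 \<le> i" "i \<le> m"
      by blast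
    thus ?thesis
    proof cases
      case x
      from Qc[OF hy] show ?thesis
      proof
        assume "\<exists>j. y = CX j \<and> 1 \<le> j \<and> j \<le> m"
        then obtain j where j: "y = CX j" "1 \<le> j" "j \<le> m" by blast
        thus ?thesis using x hle by (intro bexI[of _ "CX j"]) (auto simp: phi_def car)
      next
        assume "\<exists>j. y = CY j \<and> 1 \<le> j \<and> j \<le> m"
        then obtain j where j: "y = CY j" "1 \<le> j" "j \<le> m" by blast
        thus ?thesis using x hle CYid[of j] hy by (intro bexI[of _ "CY j"]) (auto simp: phi_def car)
      qed
    next
      case y
      show ?thesis
      proof (cases "\<exists>k. i \<le> k \<and> CY k \<in> Q")
        case True
        hence "y = phi m Q x" using hle y comb_le_CY_left by (simp add: phi_def)
        thus ?thesis using hx comb_le_refl by blast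
      next
        case False
        hence px: "phi m Q x = CX m" using y by (simp add: phi_def)
        from Qc[OF hy] have "y = CX m"
        proof
          assume "\<exists>j. y = CY j \<and> 1 \<le> j \<and> j \<le> m"
          then obtain j where j: "y = CY j" "1 \<le> j" "j \<le> m" by blast
          hence "j = m" using hle px by simp
          thus ?thesis using False j y hy by auto
        qed (use hle px in auto)
        thus ?thesis using px hx comb_le_refl by metis
      qed
    qed
  qed
  show ?thesis using into surj mono bk unfolding p_morphism_def by auto
qed

lemma backward:
  assumes "broken_comb m Q" "order_iso A le Q comb_le g"
  shows "p_morphic_image A le (comb_carrier m) comb_le"
proof -
  have io: "order_iso Q comb_le A le (inv_into A g)" using iso_inv[OF assms(2)] .
  have pm: "p_morphism (comb_carrier m) comb_le Q comb_le (phi m Q)"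
    and im: "phi m Q ` comb_carrier m = Q" using phi_pm[OF assms(1)] by auto
  have "p_morphism (comb_carrier m) comb_le A le (inv_into A g \<circ> phi m Q)"
    by (rule pm_comp_iso[OF pm io])
  moreover have "(inv_into A g \<circ> phi m Q) ` comb_carrier m = A"
    using im io unfolding order_iso_def bij_betw_def by (metis image_comp)
  ultimately show ?thesis unfolding p_morphic_image_def by blast
qed

locale cimg =
  fixes A :: "'a set" and le :: "'a \<Rightarrow> 'a \<Rightarrow> bool" and n :: nat and f :: "comb_elt \<Rightarrow> 'a"
  assumes po: "is_poset A le"
    and pm: "p_morphism (comb_carrier n) comb_le A le f"
    and im: "f ` comb_carrier n = A"
begin

lemma refl: "a \<in> A \<Longrightarrow> le a a" using po unfolding is_poset_def by auto
lemma antisym: "a \<in> A \<Longrightarrow> b \<in> A \<Longrightarrow> le a b \<Longrightarrow> le b a \<Longrightarrow> a = b"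
  using po unfolding is_poset_def by blast
lemma trans: "a \<in> A \<Longrightarrow> b \<in> A \<Longrightarrow> c \<in> A \<Longrightarrow> le a b \<Longrightarrow> le b c \<Longrightarrow> le a c"
  using po unfolding is_poset_def by blast

lemma car: "z \<in> comb_carrier n \<longleftrightarrow> (\<exists>i. z = CX i \<and> 1 \<le> i \<and> i \<le> n) \<or> (\<exists>i. z = CY i \<and> 1 \<le> i \<and> i \<le> n)"
  unfolding comb_carrier_def by auto

lemma fmono: "z \<in> comb_carrier n \<Longrightarrow> z' \<in> comb_carrier n \<Longrightarrow> comb_le z z' \<Longrightarrow> le (f z) (f z')"
  using pm unfolding p_morphism_def by blast
lemma fback: "z \<in> comb_carrier n \<Longrightarrow> a \<in> A \<Longrightarrow> le (f z) a \<Longrightarrow> \<exists>z'\<in>comb_carrier n. comb_le z z' \<and> f z' = a"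
  using pm unfolding p_morphism_def by blast

definition X where "X i = f (CX i)"
definition C where "C = X ` {1..n}"

lemma XA: "1 \<le> i \<Longrightarrow> i \<le> n \<Longrightarrow> X i \<in> A"
  using im car X_def by blast
lemma CA: "C \<subseteq> A" using XA C_def by auto
lemma finC: "finite C" by (simp add: C_def)

lemma Xmono: "1 \<le> i \<Longrightarrow> i \<le> j \<Longrightarrow> j \<le> n \<Longrightarrow> le (X i) (X j)"
  unfolding X_def by (rule fmono) (auto simp: car)

lemma total: "c \<in> C \<Longrightarrow> c' \<in> C \<Longrightarrow> le c c' \<or> le c' c"
  unfolding C_def using Xmono by (auto, meson nle_le)

lemma cases_A: "a \<in> A \<Longrightarrow> a \<in> C \<or> (\<exists>j. 1 \<le> j \<and> j \<le> n \<and> a = f (CY j))"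
  using im unfolding C_def X_def comb_carrier_def by auto

lemma maxY: "1 \<le> j \<Longrightarrow> j \<le> n \<Longrightarrow> a \<in> A \<Longrightarrow> le (f (CY j)) a \<Longrightarrow> a = f (CY j)"
  using fback[of "CY j" a] by (auto simp: car comb_le_CY_left)

lemma nA: "a \<in> A \<Longrightarrow> 1 \<le> n"
  using im unfolding comb_carrier_def by auto

lemma root: "a \<in> A \<Longrightarrow> le (X 1) a"
proof -
  assume a: "a \<in> A"
  then obtain z where z: "z \<in> comb_carrier n" "a = f z" using im by auto
  have "comb_le (CX 1) z" using z by (auto simp: car)
  thus ?thesis using fmono[of "CX 1" z] z nA[OF a] by (auto simp: car X_def)
qed

definition k where "k a = card {c \<in> C. le c a}"

lemma K1: "c \<in> C \<Longrightarrow> c' \<in> C \<Longrightarrow> le c c' \<longleftrightarrow> k c \<le> k c'"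
proof
  assume c: "c \<in> C" "c' \<in> C" and l: "le c c'"
  have "{d \<in> C. le d c} \<subseteq> {d \<in> C. le d c'}" using l c CA trans by blast
  thus "k c \<le> k c'" unfolding k_def by (intro card_mono) (auto simp: finC)
next
  assume c: "c \<in> C" "c' \<in> C" and l: "k c \<le> k c'"
  show "le c c'"
  proof (rule ccontr)
    assume nl: "\<not> le c c'"
    hence l2: "le c' c" using total c by blast
    have "{d \<in> C. le d c'} \<subset> {d \<in> C. le d c}"
      using l2 c CA trans nl refl by blast
    hence "k c' < k c" unfolding k_def by (intro psubset_card_mono) (auto simp: finC)
    thus False using l by simp
  qed
qed

lemma Kinj: "c \<in> C \<Longrightarrow> c' \<in> C \<Longrightarrow> k c = k c' \<Longrightarrow> c = c'"
proof -
  assume h: "c \<in> C" "c' \<in> C" "k c = k c'"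
  hence "le c c'" "le c' c" using K1 by auto
  thus "c = c'" using antisym CA h by blast
qed

definition I where "I a = {i \<in> {1..n}. le (X i) a}"
definition p where "p a = Max (I a)"

lemma K2: assumes w: "w \<in> A" "w \<notin> C"
  shows "p w \<in> I w" "\<And>i. i \<in> I w \<Longrightarrow> i \<le> p w" "w = f (CY (p w))"
proof -
  have n1: "1 \<le> n" using nA w by auto
  have fin: "finite (I w)" by (simp add: I_def)
  have ne: "1 \<in> I w" using n1 root w by (auto simp: I_def)
  show pI: "p w \<in> I w" unfolding p_def using fin ne Max_in by blast
  show mx: "\<And>i. i \<in> I w \<Longrightarrow> i \<le> p w" unfolding p_def using fin by auto
  have pr: "1 \<le> p w" "p w \<le> n" "le (X (p w)) w" using pI by (auto simp: I_def)
  then obtain z where z: "z \<in> comb_carrier n" "comb_le (CX (p w)) z" "f z = w"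
    using fback[of "CX (p w)" w] w by (auto simp: car X_def)
  obtain j where j: "z = CY j" "p w \<le> j" "j \<le> n"
  proof (cases z)
    case (CX i) thus ?thesis using z w(2) unfolding C_def X_def by (auto simp: car)
  next
    case (CY j) thus ?thesis using z that by (auto simp: car)
  qed
  have "j = p w"
  proof (rule ccontr)
    assume "j \<noteq> p w"
    hence "Suc (p w) \<le> j" using j by simp
    hence "le (X (Suc (p w))) w" using fmono[of "CX (Suc (p w))" "CY j"] j z pr
      by (auto simp: car X_def)
    hence "Suc (p w) \<in> I w" using \<open>Suc (p w) \<le> j\<close> j by (auto simp: I_def)
    thus False using mx by fastforce
  qed
  thus "w = f (CY (p w))" using z j by simp
qed

lemma K3: assumes w: "w \<in> A" "w \<notin> C" and c: "c \<in> C"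
  shows "le c w \<longleftrightarrow> le c (X (p w))"
proof
  have pr: "p w \<in> I w" using K2 w by blast
  assume "le c (X (p w))"
  thus "le c w" using trans[of c "X (p w)" w] pr c CA w XA by (auto simp: I_def)
next
  assume l: "le c w"
  obtain i where i: "1 \<le> i" "i \<le> n" "c = X i" using c C_def by auto
  hence "i \<in> I w" using l by (auto simp: I_def)
  hence "i \<le> p w" using K2 w by blast
  moreover have "p w \<le> n" using K2(1)[OF w] by (auto simp: I_def)
  ultimately show "le c (X (p w))" using Xmono i by auto
qed

lemma XpC: "w \<in> A \<Longrightarrow> w \<notin> C \<Longrightarrow> X (p w) \<in> C"
  using K2(1)[of w] by (auto simp: I_def C_def)

lemma kw: "w \<in> A \<Longrightarrow> w \<notin> C \<Longrightarrow> k w = k (X (p w))"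
  unfolding k_def using K3 by (metis (no_types, lifting))

lemma K4: "w \<in> A \<Longrightarrow> w \<notin> C \<Longrightarrow> c \<in> C \<Longrightarrow> le c w \<longleftrightarrow> k c \<le> k w"
  using K3 kw K1 XpC by metis

lemma K5: assumes "w \<in> A" "w \<notin> C" "w' \<in> A" "w' \<notin> C" "k w = k w'" shows "w = w'"
proof -
  have "X (p w) = X (p w')" using Kinj XpC kw assms by metis
  hence "I w = I w'" using K3 assms unfolding I_def C_def by auto
  thus ?thesis using K2(3) assms p_def by metis
qed

lemma maxW: "w \<in> A \<Longrightarrow> w \<notin> C \<Longrightarrow> a \<in> A \<Longrightarrow> le w a \<Longrightarrow> a = w"
  using K2(1,3) maxY by (metis I_def mem_Collect_eq atLeastAtMost_iff)

definition g where "g a = (if a \<in> C then CX (k a) else CY (k a))"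

lemma gord: "a \<in> A \<Longrightarrow> b \<in> A \<Longrightarrow> le a b \<longleftrightarrow> comb_le (g a) (g b)"
proof -
  assume a: "a \<in> A" and b: "b \<in> A"
  show ?thesis
  proof (cases "a \<in> C"; cases "b \<in> C")
    assume "a \<in> C" "b \<in> C" thus ?thesis using K1 by (simp add: g_def)
  next
    assume "a \<in> C" "b \<notin> C" thus ?thesis using K4 b by (simp add: g_def)
  next
    assume "a \<notin> C" "b \<in> C" thus ?thesis using maxW a b by (auto simp: g_def)
  next
    assume "a \<notin> C" "b \<notin> C" thus ?thesis using maxW[of a b] a b K5[of a b] refl[of a] by (auto simp: g_def)
  qed
qed

lemma ginj: "inj_on g A"
  by (rule inj_onI) (metis gord comb_le_refl antisym)

lemma krange: "a \<in> A \<Longrightarrow> 1 \<le> k a \<and> k a \<le> card C"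
proof -
  assume a: "a \<in> A"
  have "X 1 \<in> {c \<in> C. le c a}" using root a nA C_def by auto
  hence "1 \<le> k a" unfolding k_def using finC
    by (metis (no_types, lifting) One_nat_def Suc_leI card_gt_0_iff empty_iff finite_subset mem_Collect_eq subsetI)
  moreover have "k a \<le> card C" unfolding k_def using finC by (intro card_mono) auto
  ultimately show ?thesis by simp
qed

lemma kC: "k ` C = {1..card C}"
proof -
  have inj: "inj_on k C" using Kinj by (meson inj_onI)
  have sub: "k ` C \<subseteq> {1..card C}" using krange CA by auto
  have "card (k ` C) = card {1..card C}" using card_image[OF inj] by simp
  thus ?thesis using sub by (intro card_subset_eq) auto
qed

lemma result: "\<exists>m Q g. broken_comb m Q \<and> order_iso A le Q comb_le g"
proof (intro exI conjI)
  show "order_iso A le (g ` A) comb_le g"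
    unfolding order_iso_def bij_betw_def using ginj gord by auto
  show "broken_comb (card C) (g ` A)" unfolding broken_comb_def
  proof
    show "g ` A \<subseteq> comb_carrier (card C)"
      using krange unfolding comb_carrier_def g_def by auto
    show "{CX i |i. 1 \<le> i \<and> i \<le> card C} \<subseteq> g ` A"
    proof
      fix z assume "z \<in> {CX i |i. 1 \<le> i \<and> i \<le> card C}"
      then obtain i where i: "z = CX i" "i \<in> {1..card C}" by auto
      then obtain c where c: "c \<in> C" "i = k c" using kC by (metis imageE)
      thus "z \<in> g ` A" using i CA by (intro image_eqI[of _ _ c]) (auto simp: g_def)
    qed
  qed
qed

end

theorem mainTheorem8:
  fixes A :: "'a set" and le :: "'a \<Rightarrow> 'a \<Rightarrow> bool"
  assumes "is_poset A le"
  shows "(\<exists>n. p_morphic_image A le (comb_carrier n) comb_le) \<longleftrightarrow>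
         (\<exists>m Q g. broken_comb m Q \<and> order_iso A le Q comb_le g)"
proof
  assume "\<exists>n. p_morphic_image A le (comb_carrier n) comb_le"
  then obtain n f where "p_morphism (comb_carrier n) comb_le A le f" "f ` comb_carrier n = A"
    unfolding p_morphic_image_def by blast
  then interpret cimg A le n f using assms by unfold_locales
  show "\<exists>m Q g. broken_comb m Q \<and> order_iso A le Q comb_le g" by (rule result)
next
  assume "\<exists>m Q g. broken_comb m Q \<and> order_iso A le Q comb_le g"
  thus "\<exists>n. p_morphic_image A le (comb_carrier n) comb_le" using backward by blast
qed

end
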